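(* Let $\gamma_1,\dots,\gamma_u$ be real numbers, let $k_1<k_2<\cdots<k_t$ be positive integers, put $\underline{k}=\{k_1,\dots,k_t\}$, and let $m_0$ be a positive integer. Consider the pairs $(k,m)$ with $k\in\underline{k}$ and integers $m\ge m_0$, ordered as $(k_1,m_0),\dots,(k_t,m_0),(k_1,m_0+1),\dots,(k_t,m_0+1),(k_1,m_0+2),\dots$. Assume that for each such pair $(k,m)$ there exist a linear form $r(k,m)=h_0+\sum_{i=1}^u h_i\gamma_i$ with $h_i=h_i(k,m)\in\mathbb{Z}$ and a positive integer $Q_{k,m}$ such that \begin{align*} &c_1(k)Q_{k,m}\le\max_{1\le i\le u}|h_i|\le c_2(k)Q_{k,m},\\ &Q_{k_j,m}<Q_{k_{j+1},m}\le C_1(\underline{k})Q_{k_j,m}^{\theta(j)},\quad j=1,\dots,t-1,\\ &Q_{k_t,m}<Q_{k_1,m+1}\le C_1(\underline{k})Q_{k_t,m}^{\theta(t)},\\ &c_3(k)Q_{k,m}^{-\alpha(k)}\le|r(k,m)|\le c_4(k)Q_{k,m}^{-\beta(k)}, \end{align*} where $c_i(k)$ and $C_1(\underline{k})$ are positive constants depending only on $k$ and on $\underline{k}$ respectively, and $\theta(j)\ge1$, $\alpha(k_j)\ge\beta(k_j)>0$ are constants, all independent of $m$. Then there exist positive constants $Q_0=Q_0(\underline{k},m_0)$ and $C=C(\underline{k},m_0)$ such that for all rational numbers $p_1/q,\dots,p_u/q$ (with $p_i\in\mathbb{Z}$, $q\in\mathbb{Z}$) with $q\ge Q_0$, \[\max_{1\le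 i\le u}\left|\gamma_i-\frac{p_i}{q}\right|>Cq^{-\mu},\qquad\text{where }\mu=\max_{1\le j\le t}\theta(j)\frac{\alpha(k_{j+1})+1}{\beta(k_j)}\text{ and }\alpha(k_{t+1}):=\alpha(k_1).\] *)

theory Defs
  imports Complex_Main
begin

definition linform :: "nat \<Rightarrow> (nat \<Rightarrow> real) \<Rightarrow> (nat \<Rightarrow> int) \<Rightarrow> real" where
  "linform u \<gamma> h = real_of_int (h 0) + (\<Sum>i=1..u. real_of_int (h i) * \<gamma> i)"

definition nxt :: "nat \<Rightarrow> nat \<Rightarrow> nat" where
  "nxt t j = (if j = t then 1 else j + 1)"

end

theory Submission
  imports Defs
begin

lemma core:
  fixes u :: nat and \<gamma> :: "nat \<Rightarrow> real" and hh p :: "nat \<Rightarrow> int" and q :: int and B L :: real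
  assumes u: "u \<ge> 1" and q: "q > 0" and B: "B > 0" and L: "L > 0"
    and hM: "\<forall>i\<in>{1..u}. real_of_int \<bar>hh i\<bar> \<le> B"
    and rlow: "L \<le> \<bar>linform u \<gamma> hh\<bar>"
    and small: "real_of_int q * \<bar>linform u \<gamma> hh\<bar> \<le> 1/2"
  shows "Max ((\<lambda>i. \<bar>\<gamma> i - real_of_int (p i) / real_of_int q\<bar>) ` {1..u}) \<ge> min (1/(2*real u*B*real_of_int q)) (L/(real u*B))"
proof -
  define \<delta> where "\<delta> = Max ((\<lambda>i. \<bar>\<gamma> i - real_of_int (p i) / real_of_int q\<bar>) ` {1..u})"
  have di: "\<bar>\<gamma> i - real_of_int (p i) / real_of_int q\<bar> \<le> \<delta>" if "i \<in> {1..u}" for i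
    unfolding \<delta>_def using that by (intro Max_ge) auto
  have d0: "\<delta> \<ge> 0" using di[of 1] u by (meson abs_ge_zero atLeastAtMost_iff order_trans le_refl)
  have qr: "real_of_int q > 0" using q by simp
  define N where "N = hh 0 * q + (\<Sum>i=1..u. hh i * p i)"
  have eq: "real_of_int q * linform u \<gamma> hh - real_of_int N = (\<Sum>i=1..u. real_of_int (hh i) * (real_of_int q * \<gamma> i - real_of_int (p i)))"
    unfolding linform_def N_def by (simp add: algebra_simps sum_distrib_left sum_subtractf)
  have trm: "\<bar>real_of_int (hh i) * (real_of_int q * \<gamma> i - real_of_int (p i))\<bar> \<le> B * (real_of_int q * \<delta>)" if "i \<in> {1..u}" for i
  proof -
    have "\<bar>real_of_int q * \<gamma> i - real_of_int (p i)\<bar> = real_of_int q * \<bar>\<gamma> i - real_of_int (p i) / real_of_int q\<bar>"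
      using qr by (simp add: field_simps abs_mult[symmetric])
    also have "\<dots> \<le> real_of_int q * \<delta>" using di[OF that] qr by simp
    finally have a: "\<bar>real_of_int q * \<gamma> i - real_of_int (p i)\<bar> \<le> real_of_int q * \<delta>" .
    show ?thesis unfolding abs_mult using hM that a
      by (intro mult_mono) auto
  qed
  have bound: "\<bar>real_of_int q * linform u \<gamma> hh - real_of_int N\<bar> \<le> real u * B * real_of_int q * \<delta>"
  proof -
    have "\<bar>real_of_int q * linform u \<gamma> hh - real_of_int N\<bar> \<le> (\<Sum>i=1..u. \<bar>real_of_int (hh i) * (real_of_int q * \<gamma> i - real_of_int (p i))\<bar>)"
      unfolding eq by (rule sum_abs)
    also have "\<dots> \<le> (\<Sum>i=1..u. B * (real_of_int q * \<delta>))" by (intro sum_mono trm)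
    finally show ?thesis by simp
  qed
  show ?thesis
  proof (cases "N = 0")
    case True
    have "real_of_int q * L \<le> real_of_int q * \<bar>linform u \<gamma> hh\<bar>" using rlow qr by simp
    also have "\<dots> \<le> real u * B * real_of_int q * \<delta>" using bound True qr by (simp add: abs_mult)
    finally have "L \<le> real u * B * \<delta>" using qr by (simp add: mult.commute mult.left_commute)
    hence "L/(u*B) \<le> \<delta>" using u B by (simp add: divide_simps mult.commute)
    thus ?thesis unfolding \<delta>_def by simp
  next
    case False
    hence "1 \<le> \<bar>real_of_int N\<bar>" by linarith
    moreover have "\<bar>real_of_int q * linform u \<gamma> hh\<bar> \<le> 1/2" using small qr by (simp add: abs_mult)
    ultimately have "1/2 \<le> \<bar>real_of_int q * linform u \<gamma> hh - real_of_int N\<bar>" by linarith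
    hence "1/2 \<le> real u * B * real_of_int q * \<delta>" using bound by linarith
    hence "1/(2*u*B*q) \<le> \<delta>" using u B qr by (simp add: divide_simps mult.commute mult.left_commute)
    thus ?thesis unfolding \<delta>_def by simp
  qed
qed
lemma mu_bound:
  fixes a b th :: "nat \<Rightarrow> real"
  assumes t: "t \<ge> 1" and th: "\<forall>j\<in>{1..t}. th j \<ge> 1" and ab: "\<forall>j\<in>{1..t}. a j \<ge> b j \<and> b j > 0"
    and j: "j \<in> {1..t}"
  shows "th j / b j + 1 \<le> (MAX i\<in>{1..t}. th i * (a (nxt t i) + 1) / b i)"
proof -
  have nx: "nxt t i \<in> {1..t}" if "i \<in> {1..t}" for i using that t by (auto simp: nxt_def)
  obtain i0 where i0: "i0 \<in> {1..t}" and i0m: "th i0 / b i0 = (MAX i\<in>{1..t}. th i / b i)"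
    using Max_in[of "(\<lambda>i. th i / b i) ` {1..t}"] t by fastforce
  have ge: "th i / b i \<le> th i0 / b i0" if "i \<in> {1..t}" for i unfolding i0m using that by (intro Max_ge) auto
  define n where "n = nxt t i0"
  have n: "n \<in> {1..t}" using nx[OF i0] n_def by simp
  have bi0: "b i0 > 0" "th i0 \<ge> 1" using ab th i0 by auto
  have bn: "b n > 0" "th n \<ge> 1" "a n \<ge> b n" using ab th n by auto
  have "th n / b n \<le> th i0 / b i0" using ge[OF n] .
  hence "b i0 / th i0 \<le> b n / th n" using bi0 bn
    by (simp add: divide_simps mult.commute)
  also have "\<dots> \<le> b n" using bn by (simp add: divide_simps)
  also have "\<dots> \<le> a n" using bn by simp
  finally have "b i0 \<le> th i0 * a n" using bi0 by (simp add: divide_simps mult.commute)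
  hence one: "1 \<le> th i0 * a n / b i0" using bi0 by (simp add: divide_simps)
  have "th j / b j + 1 \<le> th i0 / b i0 + th i0 * a n / b i0" using ge[OF j] one by linarith
  also have "\<dots> = th i0 * (a (nxt t i0) + 1) / b i0" unfolding n_def by (simp add: algebra_simps add_divide_distrib)
  also have "\<dots> \<le> (MAX i\<in>{1..t}. th i * (a (nxt t i) + 1) / b i)" using i0 by (intro Max_ge) auto
  finally show ?thesis .
qed

lemma est:
  fixes q Qb K e al mu c2 c3 u :: real
  assumes q: "q \<ge> 1" and Qb: "Qb > 0" and K: "K > 0" and QbK: "Qb \<le> K * q powr e" and e: "e \<ge> 0"
    and al: "al \<ge> 0" and m1: "e + 1 \<le> mu" and m2: "e * (al + 1) \<le> mu" and c2: "c2 > 0" and c3: "c3 > 0" and u: "u \<ge> 1"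
  shows "min (1/(2*u*(c2*Qb)*q)) (c3*Qb powr (-al)/(u*(c2*Qb))) \<ge> min (1/(2*u*c2*K)) (c3*K powr(-(al+1))/(u*c2)) * q powr (-mu)"
proof -
  have qp: "q > 0" using q by simp
  have A: "1/(2*u*(c2*Qb)*q) \<ge> 1/(2*u*c2*K) * q powr (-mu)"
  proof -
    have "1/(2*u*c2*K) * q powr (-mu) \<le> 1/(2*u*c2*K) * q powr (-(e+1))"
      using q m1 u c2 K by (intro mult_left_mono powr_mono) auto
    also have "\<dots> = 1/(2*u*c2*(K * q powr e)*q)"
    proof -
      have "q powr (-(e+1)) = 1/(q powr (e+1))" using qp by (metis powr_minus_divide)
      also have "q powr (e+1) = q powr e * q" using qp by (simp add: powr_add)
      finally have "q powr (-(e+1)) = 1/(q powr e * q)" .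
      thus ?thesis by simp
    qed
    also have "\<dots> \<le> 1/(2*u*(c2*Qb)*q)"
    proof -
      have le: "2*u*(c2*Qb)*q \<le> 2*u*c2*(K*q powr e)*q" using QbK u c2 qp
        by (intro mult_right_mono mult_left_mono) auto
      have p1: "0 < 2*u*(c2*Qb)*q" using Qb u c2 qp by simp
      have p2: "0 < 2*u*c2*(K*q powr e)*q" using p1 le by linarith
      show ?thesis by (rule divide_left_mono[OF le]) (use mult_pos_pos[OF p2 p1] in auto)
    qed
    finally show ?thesis .
  qed
  have B: "c3*Qb powr (-al)/(u*(c2*Qb)) \<ge> c3*K powr(-(al+1))/(u*c2) * q powr (-mu)"
  proof -
    have "c3*K powr(-(al+1))/(u*c2) * q powr (-mu) \<le> c3*K powr(-(al+1))/(u*c2) * q powr (-(e*(al+1)))"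
      using q m2 u c2 K c3 by (intro mult_left_mono powr_mono) auto
    also have "\<dots> = c3/(u*c2) * (K * q powr e) powr (-(al+1))"
    proof -
      have "-(e*(al+1)) = e * (-(al+1))" by (simp add: algebra_simps)
      thus ?thesis using qp K by (simp add: powr_mult powr_powr)
    qed
    also have "\<dots> \<le> c3/(u*c2) * Qb powr (-(al+1))"
      using QbK Qb al u c2 c3 by (intro mult_left_mono powr_mono2') auto
    also have "\<dots> = c3*Qb powr (-al)/(u*(c2*Qb))"
    proof -
      have "Qb powr (-(al+1)) = Qb powr (-al) * Qb powr (-1)" using powr_add[of Qb "-al" "-1"] by (simp add: algebra_simps)
      also have "Qb powr (-1) = 1/Qb" using Qb by (simp add: powr_minus_divide)
      finally show ?thesis by simp
    qed
    finally show ?thesis .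
  qed
  have x0: "q powr (-mu) \<ge> 0" by simp
  have "min (1/(2*u*c2*K)) (c3*K powr(-(al+1))/(u*c2)) * q powr (-mu) \<le> 1/(2*u*c2*K) * q powr (-mu)"
    by (rule mult_right_mono[OF _ x0]) simp
  moreover have "min (1/(2*u*c2*K)) (c3*K powr(-(al+1))/(u*c2)) * q powr (-mu) \<le> c3*K powr(-(al+1))/(u*c2) * q powr (-mu)"
    by (rule mult_right_mono[OF _ x0]) simp
  ultimately show ?thesis using A B by (intro min.boundedI) linarith+
qed
theorem lemma1:
  fixes u t m0 :: nat
    and \<gamma> :: "nat \<Rightarrow> real"
    and k :: "nat \<Rightarrow> nat"
    and h :: "nat \<Rightarrow> nat \<Rightarrow> nat \<Rightarrow> int"
    and Q :: "nat \<Rightarrow> nat \<Rightarrow> nat"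
    and c1 c2 c3 c4 \<alpha> \<beta> :: "nat \<Rightarrow> real"
    and C1 :: real
    and \<theta> :: "nat \<Rightarrow> real"
  assumes u_pos: "u \<ge> 1"
    and t_pos: "t \<ge> 1"
    and m0_pos: "m0 \<ge> 1"
    and k_pos: "\<forall>j\<in>{1..t}. k j > 0"
    and k_mono: "\<forall>j\<in>{1..<t}. k j < k (j + 1)"
    and consts_pos: "\<forall>j\<in>{1..t}. c1 (k j) > 0 \<and> c2 (k j) > 0 \<and> c3 (k j) > 0 \<and> c4 (k j) > 0"
    and C1_pos: "C1 > 0"
    and theta_ge: "\<forall>j\<in>{1..t}. \<theta> j \<ge> 1"
    and alpha_beta: "\<forall>j\<in>{1..t}. \<alpha> (k j) \<ge> \<beta> (k j) \<and> \<beta> (k j) > 0"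
    and Q_pos: "\<forall>j\<in>{1..t}. \<forall>m\<ge>m0. Q (k j) m > 0"
    and h_size: "\<forall>j\<in>{1..t}. \<forall>m\<ge>m0.
        c1 (k j) * real (Q (k j) m) \<le> Max ((\<lambda>i. real_of_int \<bar>h (k j) m i\<bar>) ` {1..u}) \<and>
        Max ((\<lambda>i. real_of_int \<bar>h (k j) m i\<bar>) ` {1..u}) \<le> c2 (k j) * real (Q (k j) m)"
    and Q_step: "\<forall>j\<in>{1..<t}. \<forall>m\<ge>m0.
        Q (k j) m < Q (k (j + 1)) m \<and>
        real (Q (k (j + 1)) m) \<le> C1 * real (Q (k j) m) powr \<theta> j"
    and Q_wrap: "\<forall>m\<ge>m0.
        Q (k t) m < Q (k 1) (m + 1) \<and>
        real (Q (k 1) (m + 1)) \<le> C1 * real (Q (k t) m) powr \<theta> t"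
    and r_size: "\<forall>j\<in>{1..t}. \<forall>m\<ge>m0.
        c3 (k j) * real (Q (k j) m) powr (- \<alpha> (k j)) \<le> \<bar>linform u \<gamma> (h (k j) m)\<bar> \<and>
        \<bar>linform u \<gamma> (h (k j) m)\<bar> \<le> c4 (k j) * real (Q (k j) m) powr (- \<beta> (k j))"
  shows "\<exists>Q0 C. Q0 > 0 \<and> C > 0 \<and>
    (\<forall>(p :: nat \<Rightarrow> int) (q :: int). real_of_int q \<ge> Q0 \<longrightarrow>
       Max ((\<lambda>i. \<bar>\<gamma> i - real_of_int (p i) / real_of_int q\<bar>) ` {1..u})
         > C * real_of_int q powr (- (MAX j\<in>{1..t}. \<theta> j * (\<alpha> (k (nxt t j)) + 1) / \<beta> (k j))))"
proof -
  define S where "S = {1..t}"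
  have finS: "finite S" and neS: "S \<noteq> {}" using t_pos by (auto simp: S_def)
  define jj where "jj n = n mod t + 1" for n
  define mm where "mm n = m0 + n div t" for n
  define Qn where "Qn n = Q (k (jj n)) (mm n)" for n
  have jjS: "jj n \<in> {1..t}" for n using t_pos unfolding jj_def
    by (simp add: Suc_leI)
  have mmge: "mm n \<ge> m0" for n unfolding mm_def by simp
  have jj_suc: "jj (Suc n) = nxt t (jj n)" for n
    unfolding jj_def nxt_def by (simp add: mod_Suc)
  have step: "Qn n < Qn (Suc n) \<and> real (Qn (Suc n)) \<le> C1 * real (Qn n) powr \<theta> (jj n)" for n
  proof (cases "Suc (n mod t) = t")
    case True
    have a: "jj n = t" "jj (Suc n) = 1" "mm (Suc n) = mm n + 1"
      using True unfolding jj_def mm_def by (auto simp: mod_Suc div_Suc)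
    show ?thesis unfolding Qn_def a using Q_wrap mmge[of n] by auto
  next
    case False
    have lt: "n mod t < t" using t_pos by simp
    have a: "jj (Suc n) = jj n + 1" "mm (Suc n) = mm n" "jj n \<in> {1..<t}"
      using False lt unfolding jj_def mm_def by (auto simp: mod_Suc div_Suc)
    show ?thesis unfolding Qn_def a(1,2) using Q_step a(3) mmge[of n] by auto
  qed
  have Qn_pos: "Qn n > 0" for n unfolding Qn_def using Q_pos jjS mmge by auto
  have Qn_ge: "Qn n \<ge> n + 1" for n
  proof (induction n)
    case 0 then show ?case using Qn_pos[of 0] by simp
  next
    case (Suc n) then show ?case using step[of n] by simp
  qed
  define bmin where "bmin = Min ((\<lambda>j. \<beta> (k j)) ` S)"
  define c4M where "c4M = Max ((\<lambda>j. c4 (k j)) ` S)"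
  have bmin_le: "bmin \<le> \<beta> (k j)" if "j \<in> S" for j unfolding bmin_def using finS that by auto
  have c4M_ge: "c4 (k j) \<le> c4M" if "j \<in> S" for j unfolding c4M_def using finS that by auto
  have bmin_pos: "bmin > 0" unfolding bmin_def using finS neS alpha_beta by (auto simp: S_def)
  have c4M_pos: "c4M > 0"
  proof -
    have "1 \<in> S" using t_pos by (simp add: S_def)
    moreover have "c4 (k 1) > 0" using consts_pos t_pos by auto
    ultimately show ?thesis using c4M_ge[of 1] by linarith
  qed
  define e where "e j = \<theta> j / \<beta> (k j)" for j
  define K where "K j = C1 * (2 * c4 (k j)) powr e j" for j
  define D where "D j = min (1/(2*real u*c2 (k (nxt t j))*K j))
     (c3 (k (nxt t j))*K j powr(-(\<alpha> (k (nxt t j))+1))/(real u*c2 (k (nxt t j))))" for j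
  have nxtS: "nxt t j \<in> S" if "j \<in> S" for j using that t_pos by (auto simp: nxt_def S_def)
  have K_pos: "K j > 0" if "j \<in> S" for j
  proof -
    have "c4 (k j) > 0" using consts_pos that by (auto simp: S_def)
    thus ?thesis unfolding K_def using C1_pos by simp
  qed
  have D_pos: "D j > 0" if "j \<in> S" for j
    unfolding D_def using K_pos[OF that] consts_pos nxtS[OF that] u_pos by (auto simp: S_def)
  define Dmin where "Dmin = Min (D ` S)"
  have Dmin_le: "Dmin \<le> D j" if "j \<in> S" for j unfolding Dmin_def using finS that by auto
  have Dmin_pos: "Dmin > 0" unfolding Dmin_def using finS neS D_pos by auto
  define mu where "mu = (MAX j\<in>{1..t}. \<theta> j * (\<alpha> (k (nxt t j)) + 1) / \<beta> (k j))"
  define Q0 where "Q0 = max 1 (real (Qn 0) powr \<beta> (k (jj 0)) / c4 (k (jj 0)))"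
  have "\<forall>(p :: nat \<Rightarrow> int) (q :: int). real_of_int q \<ge> Q0 \<longrightarrow>
       Max ((\<lambda>i. \<bar>\<gamma> i - real_of_int (p i) / real_of_int q\<bar>) ` {1..u}) > Dmin/2 * real_of_int q powr (- mu)"
  proof (intro allI impI)
    fix p :: "nat \<Rightarrow> int" and q :: int
    assume qQ0: "real_of_int q \<ge> Q0"
    have q1: "real_of_int q \<ge> 1" using qQ0 unfolding Q0_def by simp
    hence q0: "q > 0" by simp
    define P where "P n \<longleftrightarrow> real_of_int q * c4 (k (jj n)) * real (Qn n) powr (- \<beta> (k (jj n))) \<le> 1/2" for n
    have exP: "\<exists>n. P n"
    proof -
      obtain N :: nat where N: "(2*c4M*real_of_int q) powr (1/bmin) \<le> real N" using real_arch_simple by blast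
      define n where "n = N + 1"
      define j where "j = jj n"
      have jS: "j \<in> S" using jjS unfolding j_def S_def by simp
      define X where "X = real (Qn n)"
      have X: "X \<ge> real n" "real n \<ge> 1" using Qn_ge[of n] unfolding X_def n_def by auto
      have b: "\<beta> (k j) \<ge> bmin" using bmin_le[OF jS] .
      have "2 * c4 (k j) * real_of_int q \<le> 2*c4M*real_of_int q" using c4M_ge[OF jS] q1 by simp
      also have "\<dots> = ((2*c4M*real_of_int q) powr (1/bmin)) powr bmin"
        using bmin_pos c4M_pos q1 by (simp add: powr_powr)
      also have "\<dots> \<le> real n powr bmin" using N bmin_pos unfolding n_def by (intro powr_mono2) auto
      also have "\<dots> \<le> X powr bmin" using X bmin_pos by (intro powr_mono2) auto
      also have "\<dots> \<le> X powr \<beta> (k j)" using X b by (intro powr_mono) auto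
      finally have le: "2 * c4 (k j) * real_of_int q \<le> X powr \<beta> (k j)" .
      have Xp: "X powr \<beta> (k j) > 0" using X by simp
      have "real_of_int q * c4 (k j) * X powr (- \<beta> (k j)) = real_of_int q * c4 (k j) / X powr \<beta> (k j)"
        by (simp add: powr_minus_divide)
      also have "\<dots> \<le> 1/2" using le Xp by (simp add: divide_simps mult.commute mult.left_commute)
      finally have "P n" unfolding P_def j_def[symmetric] X_def[symmetric] .
      thus ?thesis by blast
    qed
    define n where "n = (LEAST n. P n)"
    have Pn: "P n" unfolding n_def using exP by (rule LeastI_ex)
    have nP0: "\<not> P 0"
    proof
      assume P0: "P 0"
      define X where "X = real (Qn 0)"
      define b where "b = \<beta> (k (jj 0))"
      define c where "c = c4 (k (jj 0))"
      have c: "c > 0" using consts_pos jjS[of 0] unfolding c_def by auto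
      have Xp: "X powr b > 0" using Qn_pos[of 0] unfolding X_def by simp
      have "X powr b / c \<le> real_of_int q" using qQ0 unfolding Q0_def X_def b_def c_def by simp
      hence "X powr b \<le> real_of_int q * c" using c by (simp add: divide_simps)
      hence "1 \<le> real_of_int q * c / X powr b" using Xp by (simp add: divide_simps)
      also have "real_of_int q * c / X powr b = real_of_int q * c * X powr (-b)" by (simp add: powr_minus_divide)
      finally show False using P0 unfolding P_def X_def[symmetric] b_def[symmetric] c_def[symmetric] by linarith
    qed
    have "n \<noteq> 0" using Pn nP0 by (metis)
    then obtain n' where n': "n = Suc n'" using not0_implies_Suc by blast
    have nPn': "\<not> P n'" using not_less_Least[of n' P] n' unfolding n_def by simp
    define j where "j = jj n'"
    define j2 where "j2 = jj n"
    have jS: "j \<in> S" unfolding j_def S_def using jjS by simp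
    have j2: "j2 = nxt t j" unfolding j2_def j_def n' by (rule jj_suc)
    have j2S: "j2 \<in> S" unfolding j2_def S_def using jjS by simp
    define Qa where "Qa = real (Qn n')"
    define Qb where "Qb = real (Qn n)"
    have Qa1: "Qa \<ge> 1" "Qb \<ge> 1" using Qn_pos[of n'] Qn_pos[of n] unfolding Qa_def Qb_def by auto
    have bj: "\<beta> (k j) > 0" "\<theta> j \<ge> 1" using alpha_beta theta_ge jS by (auto simp: S_def)
    have c4j: "c4 (k j) > 0" using consts_pos jS by (auto simp: S_def)
    have "real_of_int q * c4 (k j) / Qa powr \<beta> (k j) > 1/2"
      using nPn' unfolding P_def j_def[symmetric] Qa_def[symmetric] by (simp add: powr_minus_divide)
    hence Qab: "Qa powr \<beta> (k j) < 2 * c4 (k j) * real_of_int q" using Qa1 by (simp add: divide_simps mult.commute mult.left_commute)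
    have "Qa = (Qa powr \<beta> (k j)) powr (1 / \<beta> (k j))" using bj Qa1 by (simp add: powr_powr)
    also have "\<dots> \<le> (2 * c4 (k j) * real_of_int q) powr (1 / \<beta> (k j))"
      using Qab bj by (intro powr_mono2) auto
    finally have Qa_le: "Qa \<le> (2 * c4 (k j) * real_of_int q) powr (1 / \<beta> (k j))" .
    have "Qa powr \<theta> j \<le> ((2 * c4 (k j) * real_of_int q) powr (1 / \<beta> (k j))) powr \<theta> j"
      using Qa_le Qa1 bj by (intro powr_mono2) auto
    also have "\<dots> = (2 * c4 (k j)) powr e j * real_of_int q powr e j"
      using c4j q1 unfolding e_def by (simp add: powr_powr powr_mult)
    finally have "Qa powr \<theta> j \<le> (2 * c4 (k j)) powr e j * real_of_int q powr e j" .
    hence "C1 * Qa powr \<theta> j \<le> K j * real_of_int q powr e j"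
      unfolding K_def using C1_pos by (simp add: mult.assoc)
    moreover have "Qb \<le> C1 * Qa powr \<theta> j" using step[of n'] unfolding Qb_def Qa_def n' j_def by simp
    ultimately have QbK: "Qb \<le> K j * real_of_int q powr e j" by linarith
    have ej: "e j \<ge> 0" unfolding e_def using bj by simp
    have al: "\<alpha> (k j2) \<ge> 0"
    proof -
      have "\<beta> (k j2) \<le> \<alpha> (k j2) \<and> 0 < \<beta> (k j2)" using alpha_beta j2S unfolding S_def by blast
      thus ?thesis by linarith
    qed
    have m1: "e j + 1 \<le> mu" unfolding mu_def e_def
      using mu_bound[where t=t and th=\<theta> and a="\<lambda>j. \<alpha> (k j)" and b="\<lambda>j. \<beta> (k j)" and j=j] t_pos theta_ge alpha_beta jS by (simp add: S_def)
    have m2: "e j * (\<alpha> (k j2) + 1) \<le> mu" unfolding mu_def e_def j2 using jS finS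
      by (simp add: S_def)
    have c23: "c2 (k j2) > 0" "c3 (k j2) > 0" "c4 (k j2) > 0" "c1 (k j2) > 0" using consts_pos j2S by (auto simp: S_def)
    have E: "min (1/(2*real u*(c2 (k j2)*Qb)*real_of_int q)) (c3 (k j2)*Qb powr (-\<alpha> (k j2))/(real u*(c2 (k j2)*Qb)))
        \<ge> D j * real_of_int q powr (-mu)"
      unfolding D_def j2[symmetric]
      using est[OF q1 _ K_pos[OF jS] QbK ej al m1 m2 c23(1) c23(2)] Qa1 u_pos by simp
    define hh where "hh = h (k j2) (mm n)"
    have j2t: "j2 \<in> {1..t}" using j2S by (simp add: S_def)
    have hM: "\<forall>i\<in>{1..u}. real_of_int \<bar>hh i\<bar> \<le> c2 (k j2) * Qb"
    proof
      fix i assume i: "i \<in> {1..u}"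
      have "real_of_int \<bar>hh i\<bar> \<le> Max ((\<lambda>i. real_of_int \<bar>h (k j2) (mm n) i\<bar>) ` {1..u})"
        unfolding hh_def using i by (intro Max_ge) auto
      also have "\<dots> \<le> c2 (k j2) * Qb" using h_size j2t mmge[of n] unfolding Qb_def Qn_def j2_def by blast
      finally show "real_of_int \<bar>hh i\<bar> \<le> c2 (k j2) * Qb" .
    qed
    have rb: "c3 (k j2) * Qb powr (- \<alpha> (k j2)) \<le> \<bar>linform u \<gamma> hh\<bar>"
             "\<bar>linform u \<gamma> hh\<bar> \<le> c4 (k j2) * Qb powr (- \<beta> (k j2))"
      using r_size j2t mmge[of n] unfolding Qb_def Qn_def j2_def hh_def by blast+
    have small: "real_of_int q * \<bar>linform u \<gamma> hh\<bar> \<le> 1/2"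
    proof -
      have "real_of_int q * \<bar>linform u \<gamma> hh\<bar> \<le> real_of_int q * (c4 (k j2) * Qb powr (- \<beta> (k j2)))"
        using rb(2) q1 by (intro mult_left_mono) auto
      also have "\<dots> \<le> 1/2" using Pn unfolding P_def j2_def[symmetric] Qb_def[symmetric] by (simp add: mult.assoc)
      finally show ?thesis .
    qed
    have core_res: "Max ((\<lambda>i. \<bar>\<gamma> i - real_of_int (p i) / real_of_int q\<bar>) ` {1..u})
       \<ge> min (1/(2*real u*(c2 (k j2)*Qb)*real_of_int q)) (c3 (k j2)*Qb powr (-\<alpha> (k j2))/(real u*(c2 (k j2)*Qb)))"
      by (rule core[OF u_pos q0 _ _ hM rb(1) small]) (use c23 Qa1 in auto)
    have qp: "real_of_int q powr (-mu) > 0" using q1 by simp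
    have "Dmin/2 * real_of_int q powr (-mu) < Dmin * real_of_int q powr (-mu)" using Dmin_pos qp by simp
    also have "\<dots> \<le> D j * real_of_int q powr (-mu)" using Dmin_le[OF jS] qp by (intro mult_right_mono) auto
    finally show "Max ((\<lambda>i. \<bar>\<gamma> i - real_of_int (p i) / real_of_int q\<bar>) ` {1..u}) > Dmin/2 * real_of_int q powr (- mu)"
      using E core_res by linarith
  qed
  moreover have "Q0 > 0" unfolding Q0_def by simp
  moreover have "Dmin/2 > 0" using Dmin_pos by simp
  ultimately show ?thesis unfolding mu_def by blast
qed

end
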